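(* Let $k$ be a positive integer and $m,n$ nonnegative integers. Let $r:=m \bmod k$ and $s:=n \bmod k$. Then \[ \nu_k(K_{m,n}) \le \frac{(m-r)(n-s)}{4k^2}(m-k+r)(n-k+s) \le \frac{1}{k^2}\binom{m}{2}\binom{n}{2}. \]
   Context: A book with $k$ pages consists of a line (the spine) and $k$ half-planes (the pages) whose common boundary is the spine. A $k$-page drawing of a graph places all vertices on the spine and draws each edge inside a single page (edges may cross). The $k$-page crossing number $\nu_k(G)$ is the minimum number of crossings over all $k$-page drawings of $G$. *)

theory Defs
  imports Complex_Main
begin

text \<open>A k-page drawing is determined by an injective placement of the vertices on the spine
(pos) and an assignment of each edge to one of the pages 0..k-1 (pg).  With edges drawn
optimally (as semicircles), two edges on the same page cross exactly when their
endpoints interleave along the spine; the count below counts each crossing pair once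
(ordered so that the first edge starts further left).\<close>

definition interleave :: "('a \<Rightarrow> nat) \<Rightarrow> 'a set \<Rightarrow> 'a set \<Rightarrow> bool" where
  "interleave pos e f \<longleftrightarrow> (\<exists>a b c d. e = {a, b} \<and> f = {c, d} \<and>
      pos a < pos c \<and> pos c < pos b \<and> pos b < pos d)"

definition book_crossings :: "('a \<Rightarrow> nat) \<Rightarrow> ('a set \<Rightarrow> nat) \<Rightarrow> 'a set set \<Rightarrow> nat" where
  "book_crossings pos pg E =
     card {(e, f). e \<in> E \<and> f \<in> E \<and> pg e = pg f \<and> interleave pos e f}"

definition book_drawing :: "nat \<Rightarrow> 'a set \<Rightarrow> 'a set set \<Rightarrow> ('a \<Rightarrow> nat) \<Rightarrow> ('a set \<Rightarrow> nat) \<Rightarrow> bool" where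
  "book_drawing k V E pos pg \<longleftrightarrow> inj_on pos V \<and> (\<forall>e\<in>E. pg e < k)"

definition book_crossing_number :: "nat \<Rightarrow> 'a set \<Rightarrow> 'a set set \<Rightarrow> nat" where
  "book_crossing_number k V E =
     (LEAST c. \<exists>pos pg. book_drawing k V E pos pg \<and> c = book_crossings pos pg E)"

definition Kmn_V :: "nat \<Rightarrow> nat \<Rightarrow> (nat + nat) set" where
  "Kmn_V m n = Inl ` {..<m} \<union> Inr ` {..<n}"

definition Kmn_E :: "nat \<Rightarrow> nat \<Rightarrow> (nat + nat) set set" where
  "Kmn_E m n = {{Inl i, Inr j} | i j. i < m \<and> j < n}"

end

theory Submission imports Defs begin

definition AA :: "nat \<Rightarrow> nat \<Rightarrow> (nat \<times> nat) set" where
  "AA k m = {(i,i'). i < i' \<and> i' < m \<and> i mod k = i' mod k}"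

lemma AA_fin: "finite (AA k m)"
  by (rule finite_subset[of _ "{..<m} \<times> {..<m}"]) (auto simp: AA_def)

lemma card_same_mod: assumes "k > 0"
  shows "card {i. i < m \<and> i mod k = m mod k} \<le> m div k"
proof -
  have "card {i. i < m \<and> i mod k = m mod k} \<le> card {..<m div k}"
  proof (rule card_inj_on_le[where f = "\<lambda>i. i div k"])
    show "inj_on (\<lambda>i. i div k) {i. i < m \<and> i mod k = m mod k}"
      by (rule inj_onI) (metis (mono_tags, lifting) div_mult_mod_eq mem_Collect_eq)
    show "(\<lambda>i. i div k) ` {i. i < m \<and> i mod k = m mod k} \<subseteq> {..<m div k}"
    proof
      fix x assume "x \<in> (\<lambda>i. i div k) ` {i. i < m \<and> i mod k = m mod k}"
      then obtain i where i: "i < m" "i mod k = m mod k" "x = i div k" by auto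
      show "x \<in> {..<m div k}"
      proof (rule ccontr)
        assume "x \<notin> {..<m div k}"
        hence "m div k \<le> i div k" using i by auto
        hence "k * (m div k) \<le> k * (i div k)" by simp
        hence "m \<le> i" using i(2) by (metis add_le_cancel_right div_mult_mod_eq mult.commute)
        thus False using i by simp
      qed
    qed
  qed auto
  thus ?thesis by simp
qed

lemma card_AA: assumes "k > 0"
  shows "2 * real (card (AA k m)) \<le> real (m div k) * (real m + real (m mod k) - real k)"
proof (induction m)
  case 0
  then show ?case by (simp add: AA_def)
next
  case (Suc m)
  have sub: "AA k (Suc m) \<subseteq> AA k m \<union> (\<lambda>i. (i, m)) ` {i. i < m \<and> i mod k = m mod k}"
    by (auto simp: AA_def less_Suc_eq)
  have "card (AA k (Suc m)) \<le> card (AA k m \<union> (\<lambda>i. (i, m)) ` {i. i < m \<and> i mod k = m mod k})"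
    by (rule card_mono[OF _ sub]) (auto simp: AA_fin)
  also have "\<dots> \<le> card (AA k m) + card ((\<lambda>i. (i, m)) ` {i. i < m \<and> i mod k = m mod k})"
    by (rule card_Un_le)
  also have "\<dots> \<le> card (AA k m) + card {i. i < m \<and> i mod k = m mod k}"
    using card_image_le[of "{i. i < m \<and> i mod k = m mod k}" "\<lambda>i. (i, m)"] by simp
  also have "\<dots> \<le> card (AA k m) + m div k" using card_same_mod[OF assms, of m] by simp
  finally have st: "real (card (AA k (Suc m))) \<le> real (card (AA k m)) + real (m div k)" by linarith
  define a where "a = m div k"
  define c where "c = m mod k"
  have m: "real m = real a * real k + real c" unfolding a_def c_def
    by (metis div_mult_mod_eq of_nat_add of_nat_mult)
  have ck: "c < k" using assms by (simp add: c_def)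
  show ?case
  proof (cases "Suc c = k")
    case True
    have h1: "Suc m mod k = 0" using True by (simp add: mod_Suc c_def)
    have h2: "Suc m div k = Suc a" using True by (simp add: div_Suc mod_Suc c_def a_def)
    have ih: "2 * real (card (AA k m)) \<le> real a * (real m + real c - real k)"
      using Suc.IH unfolding a_def c_def .
    have rc: "real c = real k - 1" using True[symmetric] by simp
    have e: "real a * (real m + real c - real k) + 2 * real a = real (Suc a) * (real (Suc m) - real k)"
      unfolding of_nat_Suc m rc by (simp add: algebra_simps)
    show ?thesis unfolding h1 h2 using e ih st a_def by simp
  next
    case False
    have "Suc m mod k = Suc c" using False by (simp add: mod_Suc c_def)
    moreover have "Suc m div k = a" using False by (simp add: div_Suc mod_Suc c_def a_def)
    moreover have ih: "2 * real (card (AA k m)) \<le> real a * (real m + real c - real k)"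
      using Suc.IH unfolding a_def c_def .
    ultimately have e: "real (Suc m div k) * (real (Suc m) + real (Suc m mod k) - real k) = real a * (real m + real c - real k) + 2 * real a"
      by (simp add: algebra_simps)
    show ?thesis unfolding e using ih st a_def by linarith
  qed
qed

fun grp :: "nat \<Rightarrow> nat + nat \<Rightarrow> nat" where
  "grp k (Inl i) = 2 * (i mod k)"
| "grp k (Inr j) = 2 * (j mod k) + 1"

fun idx :: "nat + nat \<Rightarrow> nat" where
  "idx (Inl i) = i"
| "idx (Inr j) = j"

definition posf :: "nat \<Rightarrow> nat \<Rightarrow> nat + nat \<Rightarrow> nat" where
  "posf k N x = grp k x * N + idx x"

definition pgf :: "nat \<Rightarrow> (nat + nat) set \<Rightarrow> nat" where
  "pgf k e = (\<Sum>x\<in>e. idx x) mod k"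

lemma cmp: fixes G1 G2 N x y :: nat
  assumes "G1 * N + x < G2 * N + y" "x < N" "y < N"
  shows "G1 < G2 \<or> (G1 = G2 \<and> x < y)"
proof (cases "G2 < G1")
  case True
  hence "Suc G2 * N \<le> G1 * N" by (metis Suc_leI mult_le_mono1)
  thus ?thesis using assms by simp
next
  case False
  thus ?thesis using assms by (cases "G1 = G2") auto
qed

lemma modsum: fixes u v u' v' k :: nat
  assumes "u < k" "v < k" "u' < k" "v' < k" "(u + v) mod k = (u' + v') mod k"
  shows "u + v = u' + v' \<or> u + v = u' + v' + k \<or> u' + v' = u + v + k"
proof -
  have h: "x < 2 * k \<Longrightarrow> x mod k = (if x < k then x else x - k)" for x :: nat
    by (auto simp: le_mod_geq)
  show ?thesis using assms h[of "u+v"] h[of "u'+v'"] by (auto split: if_splits)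
qed

lemma par_simps: fixes x y :: nat shows
  "(2*x < 2*y+1) = (x \<le> y)" "(2*x+1 < 2*y) = (x < y)" "(2*x = 2*y+1) = False" "(2*x+1 = 2*y) = False"
  "(2*x < 2*y) = (x < y)" "(2*x+1 < 2*y+1) = (x < y)" "(2*x = 2*y) = (x = y)" "(2*x+1 = 2*y+1) = (x = y)"
  by presburger+

lemma key: fixes k N i i' j j' :: nat
  assumes k: "k > 0" and b: "i < N" "i' < N" "j < N" "j' < N"
    and sm: "(i + j) mod k = (i' + j') mod k"
    and il: "interleave (posf k N) {Inl i, Inr j} {Inl i', Inr j'}"
  shows "i mod k = i' mod k \<and> j mod k = j' mod k \<and> i < i' \<and> j < j'"
proof -
  obtain a b c d where ab: "{Inl i, Inr j} = {a, b}" and cd: "{Inl i', Inr j'} = {c, d}"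
    and p1: "posf k N a < posf k N c" and p2: "posf k N c < posf k N b" and p3: "posf k N b < posf k N d"
    using il unfolding interleave_def by blast
  have ab': "a = Inl i \<and> b = Inr j \<or> a = Inr j \<and> b = Inl i" using ab by (auto simp: doubleton_eq_iff)
  have cd': "c = Inl i' \<and> d = Inr j' \<or> c = Inr j' \<and> d = Inl i'" using cd by (auto simp: doubleton_eq_iff)
  have idxb: "idx a < N" "idx b < N" "idx c < N" "idx d < N" using ab' cd' b by auto
  have q1: "grp k a < grp k c \<or> (grp k a = grp k c \<and> idx a < idx c)"
    using cmp[OF p1[unfolded posf_def]] idxb by blast
  have q2: "grp k c < grp k b \<or> (grp k c = grp k b \<and> idx c < idx b)"
    using cmp[OF p2[unfolded posf_def]] idxb by blast
  have q3: "grp k b < grp k d \<or> (grp k b = grp k d \<and> idx b < idx d)"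
    using cmp[OF p3[unfolded posf_def]] idxb by blast
  have sm': "((i mod k) + (j mod k)) mod k = ((i' mod k) + (j' mod k)) mod k"
    using sm by (simp add: mod_add_eq)
  have ms: "i mod k + j mod k = i' mod k + j' mod k \<or> i mod k + j mod k = i' mod k + j' mod k + k
      \<or> i' mod k + j' mod k = i mod k + j mod k + k"
    using modsum[OF _ _ _ _ sm'] k by simp
  have bd: "i mod k < k" "j mod k < k" "i' mod k < k" "j' mod k < k" using k by auto
  define u where "u = i mod k"
  define v where "v = j mod k"
  define u' where "u' = i' mod k"
  define v' where "v' = j' mod k"
  note defs = u_def[symmetric] v_def[symmetric] u'_def[symmetric] v'_def[symmetric]
  from ab' cd' show ?thesis
  proof (elim disjE conjE)
    assume A: "a = Inl i" "b = Inr j" "c = Inl i'" "d = Inr j'"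
    show ?thesis using q1 q2 q3 ms bd unfolding A grp.simps idx.simps par_simps defs
      apply - apply (elim disjE conjE) apply simp_all done
  next
    assume A: "a = Inl i" "b = Inr j" "c = Inr j'" "d = Inl i'"
    show ?thesis using q1 q2 q3 ms bd unfolding A grp.simps idx.simps par_simps defs
      apply - apply (elim disjE conjE) apply simp_all done
  next
    assume A: "a = Inr j" "b = Inl i" "c = Inl i'" "d = Inr j'"
    show ?thesis using q1 q2 q3 ms bd unfolding A grp.simps idx.simps par_simps defs
      apply - apply (elim disjE conjE) apply simp_all done
  next
    assume A: "a = Inr j" "b = Inl i" "c = Inr j'" "d = Inl i'"
    show ?thesis using q1 q2 q3 ms bd unfolding A grp.simps idx.simps par_simps defs
      apply - apply (elim disjE conjE) apply simp_all done
  qed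
qed

lemma cmp_eq: fixes G1 G2 N x y :: nat
  assumes "G1 * N + x = G2 * N + y" "x < N" "y < N"
  shows "G1 = G2 \<and> x = y"
proof -
  have "\<not> (G1 * N + x < G2 * N + y)" "\<not> (G2 * N + y < G1 * N + x)" using assms by auto
  moreover have "G1 < G2 \<Longrightarrow> G1 * N + x < G2 * N + y"
  proof -
    assume "G1 < G2" hence "Suc G1 * N \<le> G2 * N" by (metis Suc_leI mult_le_mono1)
    thus ?thesis using assms by simp
  qed
  moreover have "G2 < G1 \<Longrightarrow> G2 * N + y < G1 * N + x"
  proof -
    assume "G2 < G1" hence "Suc G2 * N \<le> G1 * N" by (metis Suc_leI mult_le_mono1)
    thus ?thesis using assms by simp
  qed
  ultimately show ?thesis using assms by (metis linorder_neqE_nat add_left_cancel)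
qed

lemma choose2_real: "real (m choose 2) = real m * (real m - 1) / 2"
proof (induction m)
  case 0 then show ?case by simp
next
  case (Suc m)
  have "Suc m choose 2 = (m choose 1) + (m choose 2)"
    by (metis Suc_1 binomial_Suc_Suc)
  then show ?case using Suc by (simp add: algebra_simps add_divide_distrib[symmetric])
qed

lemma T_le: assumes "k > 0"
  shows "real (m div k) * (real m + real (m mod k) - real k) / 2 \<le> real (m choose 2) / real k"
proof -
  define a where "a = m div k"
  define r where "r = m mod k"
  have m: "real m = real a * real k + real r" unfolding a_def r_def
    by (metis div_mult_mod_eq of_nat_add of_nat_mult)
  have k1: "real k \<ge> 1" using assms by simp
  have rr: "real r * (real r - 1) \<ge> 0" by (cases r) auto
  have ak: "real a * real k * (real k - 1) \<ge> 0" using k1 by simp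
  have "real a * (real m + real r - real k) * real k \<le> real m * (real m - 1)"
  proof -
    have "real m * (real m - 1) - real a * (real m + real r - real k) * real k
       = real a * real k * (real k - 1) + real r * (real r - 1)"
      unfolding m by (simp add: algebra_simps power2_eq_square)
    thus ?thesis using rr ak by linarith
  qed
  thus ?thesis unfolding choose2_real a_def[symmetric] r_def[symmetric] using assms
    by (simp add: field_simps)
qed

lemma T_nonneg: assumes "k > 0"
  shows "real (card (AA k m)) \<le> real (m div k) * (real m + real (m mod k) - real k) / 2"
  using card_AA[OF assms, of m] by simp

lemma sum_edge: "(\<Sum>x\<in>{Inl i, Inr j}. idx x) = i + j"
  by simp

lemma crossing_bound: assumes k: "k > 0"
  shows "book_crossing_number k (Kmn_V m n) (Kmn_E m n) \<le> card (AA k m) * card (AA k n)"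
proof -
  define N where "N = m + n"
  define pos where "pos = posf k N"
  define pg where "pg = pgf k"
  have dr: "book_drawing k (Kmn_V m n) (Kmn_E m n) pos pg"
    unfolding book_drawing_def
  proof
    show "inj_on pos (Kmn_V m n)"
    proof (rule inj_onI)
      fix x y assume x: "x \<in> Kmn_V m n" and y: "y \<in> Kmn_V m n" and e: "pos x = pos y"
      have "idx x < N" "idx y < N" using x y by (auto simp: Kmn_V_def N_def)
      hence g: "grp k x = grp k y \<and> idx x = idx y"
        using cmp_eq[of "grp k x" N "idx x" "grp k y" "idx y"] e by (simp add: pos_def posf_def)
      show "x = y"
      proof (cases x)
        case (Inl i) then show ?thesis using g by (cases y) (auto simp: par_simps)
      next
        case (Inr i) then show ?thesis using g by (cases y) (auto simp: par_simps)
      qed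
    qed
    show "\<forall>e\<in>Kmn_E m n. pg e < k" using k by (simp add: pg_def pgf_def)
  qed
  have le: "book_crossing_number k (Kmn_V m n) (Kmn_E m n) \<le> book_crossings pos pg (Kmn_E m n)"
    unfolding book_crossing_number_def by (rule Least_le) (use dr in blast)
  define F where "F = (\<lambda>((i::nat, i'::nat), (j::nat, j'::nat)). ({Inl i, Inr j} :: (nat+nat) set, {Inl i', Inr j'} :: (nat+nat) set))"
  have sub: "{(e, f). e \<in> Kmn_E m n \<and> f \<in> Kmn_E m n \<and> pg e = pg f \<and> interleave pos e f}
      \<subseteq> F ` (AA k m \<times> AA k n)"
  proof
    fix p assume "p \<in> {(e, f). e \<in> Kmn_E m n \<and> f \<in> Kmn_E m n \<and> pg e = pg f \<and> interleave pos e f}"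
    then obtain i j i' j' where p: "p = ({Inl i, Inr j}, {Inl i', Inr j'})" and b: "i < m" "j < n" "i' < m" "j' < n"
      and pgq: "pg {Inl i, Inr j} = pg {Inl i', Inr j'}" and il: "interleave pos {Inl i, Inr j} {Inl i', Inr j'}"
      unfolding Kmn_E_def by blast
    have sm: "(i + j) mod k = (i' + j') mod k" using pgq by (simp add: pg_def pgf_def)
    have r: "i mod k = i' mod k \<and> j mod k = j' mod k \<and> i < i' \<and> j < j'"
      using key[OF k _ _ _ _ sm il[unfolded pos_def]] b by (simp add: N_def)
    have "((i, i'), (j, j')) \<in> AA k m \<times> AA k n" using r b by (simp add: AA_def)
    moreover have "p = F ((i, i'), (j, j'))" using p by (simp add: F_def)
    ultimately show "p \<in> F ` (AA k m \<times> AA k n)" by blast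
  qed
  have "book_crossings pos pg (Kmn_E m n) \<le> card (F ` (AA k m \<times> AA k n))"
    unfolding book_crossings_def by (rule card_mono[OF _ sub]) (simp add: AA_fin)
  also have "\<dots> \<le> card (AA k m \<times> AA k n)" by (rule card_image_le) (simp add: AA_fin)
  also have "\<dots> = card (AA k m) * card (AA k n)" by (rule card_cartesian_product)
  finally show ?thesis using le by linarith
qed

theorem theorem6:
  fixes k m n :: nat
  assumes "k > 0"
  defines "r \<equiv> m mod k" and "s \<equiv> n mod k"
  shows "real (book_crossing_number k (Kmn_V m n) (Kmn_E m n))
           \<le> (real (m - r) * real (n - s)) / (4 * real k ^ 2)
              * (real m - real k + real r) * (real n - real k + real s)
       \<and> (real (m - r) * real (n - s)) / (4 * real k ^ 2)
              * (real m - real k + real r) * (real n - real k + real s)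
           \<le> 1 / real k ^ 2 * real (m choose 2) * real (n choose 2)"
proof -
  define Tm where "Tm = real (m div k) * (real m + real (m mod k) - real k) / 2"
  define Tn where "Tn = real (n div k) * (real n + real (n mod k) - real k) / 2"
  have em: "real (m - r) = real (m div k) * real k" unfolding r_def minus_mod_eq_div_mult by simp
  have en: "real (n - s) = real (n div k) * real k" unfolding s_def minus_mod_eq_div_mult by simp
  have E: "(real (m - r) * real (n - s)) / (4 * real k ^ 2)
              * (real m - real k + real r) * (real n - real k + real s) = Tm * Tn"
  proof -
    have t1: "Tm = real (m div k) * (real m - real k + real r) / 2" unfolding Tm_def r_def by simp
    have t2: "Tn = real (n div k) * (real n - real k + real s) / 2" unfolding Tn_def s_def by simp
    have k0: "real k \<noteq> 0" using assms by simp
    show ?thesis unfolding em en t1 t2 using k0 by (simp add: field_simps power2_eq_square)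
  qed
  have cm: "real (card (AA k m)) \<le> Tm" unfolding Tm_def by (rule T_nonneg[OF assms(1)])
  have cn: "real (card (AA k n)) \<le> Tn" unfolding Tn_def by (rule T_nonneg[OF assms(1)])
  have "real (book_crossing_number k (Kmn_V m n) (Kmn_E m n)) \<le> real (card (AA k m)) * real (card (AA k n))"
    using crossing_bound[OF assms(1), of m n] by (metis of_nat_le_iff of_nat_mult)
  also have "\<dots> \<le> Tm * Tn" by (rule mult_mono[OF cm cn]) (use cm in auto)
  finally have A: "real (book_crossing_number k (Kmn_V m n) (Kmn_E m n)) \<le> Tm * Tn" .
  have bm: "Tm \<le> real (m choose 2) / real k" unfolding Tm_def by (rule T_le[OF assms(1)])
  have bn: "Tn \<le> real (n choose 2) / real k" unfolding Tn_def by (rule T_le[OF assms(1)])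
  have "Tm * Tn \<le> (real (m choose 2) / real k) * (real (n choose 2) / real k)"
    by (rule mult_mono[OF bm bn]) (use cm cn bm in auto)
  also have "\<dots> = 1 / real k ^ 2 * real (m choose 2) * real (n choose 2)"
    by (simp add: power2_eq_square)
  finally show ?thesis using A E by simp
qed

end
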